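(* Let $m\geq 15$ and $k\geq 1$ be integers and let $c(x)=1+\sum_{j\in\{2,3,4,7\}}(x^j+x^{m-j})\in\mathbb{F}_2[x]$. Then $\gcd(c(x^k),x^m-1)=1$ if and only if $\gcd(m,3k)=\gcd(m,5k)=\gcd(m,k)$.
   Context: All polynomials are over $\mathbb{F}_2$. *)

theory Defs
  imports "HOL-Library.Z2" "HOL-Computational_Algebra.Polynomial"
begin

definition c_poly :: "nat \<Rightarrow> bit poly" where
  "c_poly m = 1 + (\<Sum>j\<in>{2,3,4,7::nat}. monom 1 j + monom 1 (m - j))"

end

theory Submission imports Defs "HOL-Computational_Algebra.Polynomial_Factorial" "HOL-Computational_Algebra.Field_as_Ring" begin

instantiation bit ::
  "{unique_euclidean_ring, normalization_euclidean_semiring, normalization_semidom_multiplicative}"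
begin
definition [simp]: "normalize_bit = (normalize_field :: bit \<Rightarrow> _)"
definition [simp]: "unit_factor_bit = (unit_factor_field :: bit \<Rightarrow> _)"
definition [simp]: "euclidean_size_bit = (euclidean_size_field :: bit \<Rightarrow> _)"
definition [simp]: "division_segment (x :: bit) = 1"
instance
  by standard (auto simp: modulo_bit_def)
end

instantiation bit :: euclidean_ring_gcd
begin
definition gcd_bit :: "bit \<Rightarrow> bit \<Rightarrow> bit" where "gcd_bit = Euclidean_Algorithm.gcd"
definition lcm_bit :: "bit \<Rightarrow> bit \<Rightarrow> bit" where "lcm_bit = Euclidean_Algorithm.lcm"
definition Gcd_bit :: "bit set \<Rightarrow> bit" where "Gcd_bit = Euclidean_Algorithm.Gcd"
definition Lcm_bit :: "bit set \<Rightarrow> bit" where "Lcm_bit = Euclidean_Algorithm.Lcm"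
instance by standard (simp_all add: gcd_bit_def lcm_bit_def Gcd_bit_def Lcm_bit_def)
end

instance bit :: field_gcd ..



lemma dvd_pow_gcd:
  fixes y d :: "'a::comm_ring_1"
  shows "d dvd y^a - 1 \<Longrightarrow> d dvd y^b - 1 \<Longrightarrow> d dvd y^(gcd a b) - 1"
proof (induction "a+b" arbitrary: a b rule: less_induct)
  case less
  show ?case
  proof (cases "a = 0 \<or> b = 0")
    case True then show ?thesis using less.prems by auto
  next
    case False
    show ?thesis
    proof (cases "b \<le> a")
      case True
      have e: "y^a - 1 - y^(a-b) * (y^b - 1) = y^(a-b) - 1"
        using True by (simp add: algebra_simps flip: power_add)
      have "d dvd y^(a-b) - 1" unfolding e[symmetric]
        using less.prems by (simp add: dvd_diff)
      then have "d dvd y^(gcd (a-b) b) - 1" using less.hyps[of "a-b" b] less.prems False by auto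
      then show ?thesis using gcd_diff1_nat[OF True] by simp
    next
      case F2: False
      have e: "y^b - 1 - y^(b-a) * (y^a - 1) = y^(b-a) - 1"
        using F2 by (simp add: algebra_simps flip: power_add)
      have "d dvd y^(b-a) - 1" unfolding e[symmetric]
        using less.prems by (simp add: dvd_diff)
      then have "d dvd y^(gcd a (b-a)) - 1" using less.hyps[of a "b-a"] less.prems False F2 by auto
      then show ?thesis using gcd_diff1_nat[of a b] F2 by (simp add: gcd.commute)
    qed
  qed
qed

lemma pow_minus_one_dvd:
  fixes y :: "'a::comm_ring_1"
  assumes "a dvd b" shows "y^a - 1 dvd y^b - 1"
proof -
  obtain c where "b = a * c" using assms by auto
  then have "y^b - 1 = (y^a)^c - 1" by (simp add: power_mult)
  also have "\<dots> = (y^a - 1) * (\<Sum>i<c. (y^a)^i)" by (rule power_diff_1_eq)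
  finally show ?thesis by simp
qed

lemma ring_aux:
  fixes S R U V D E :: "'a::comm_ring_1"
  assumes "S - 1 = D*R" "D = U*(D*S) - V*E"
  shows "1 = S*(1 - R*U*D) + R*V*E"
proof -
  have "S*(1 - R*U*D) + R*V*E = S - R*(U*(D*S) - V*E)" by (simp add: algebra_simps)
  also have "\<dots> = S - R*D" using assms(2) by simp
  also have "\<dots> = S - (S - 1)" using assms(1) by (simp add: mult.commute)
  finally show ?thesis by simp
qed

lemma bez:
  fixes y :: "'a::comm_ring_1"
  assumes "a \<noteq> 0"
  shows "\<exists>U V. y^(gcd a b) - 1 = U * (y^a - 1) - V * (y^b - 1)"
proof -
  obtain A B where AB: "a * A = b * B + gcd a b" using bezout_nat[OF assms] by blast
  have "y^a - 1 dvd y^(a*A) - 1" by (rule pow_minus_one_dvd) simp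
  then obtain U where U: "y^(a*A) - 1 = (y^a - 1) * U" by (metis dvdE)
  have "y^b - 1 dvd y^(b*B) - 1" by (rule pow_minus_one_dvd) simp
  then obtain V where V: "y^(b*B) - 1 = (y^b - 1) * V" by (metis dvdE)
  have pw: "y^(a*A) = y^(gcd a b) * y^(b*B)" unfolding AB power_add by (simp add: mult.commute)
  have gen: "\<And>P Q :: 'a. P - 1 = (P*Q - 1) - P * (Q - 1)" by (simp add: algebra_simps)
  have "y^(gcd a b) - 1 = (y^(a*A) - 1) - y^(gcd a b) * (y^(b*B) - 1)"
    unfolding pw by (rule gen)
  also have "\<dots> = U * (y^a - 1) - (y^(gcd a b) * V) * (y^b - 1)"
    unfolding U V by (simp add: algebra_simps)
  finally show ?thesis by blast
qed

lemma geom_minus_p: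
  fixes z :: "'a::comm_ring_1"
  shows "z - 1 dvd (\<Sum>i<p. z^i) - of_nat p"
proof -
  have "(\<Sum>i<p. z^i) - of_nat p = (\<Sum>i<p. z^i - 1)" by (simp add: sum_subtractf)
  also have "z - 1 dvd \<dots>"
    by (rule dvd_sum) (metis power_one_right pow_minus_one_dvd one_dvd)
  finally show ?thesis .
qed

lemma nt1:
  fixes p m k :: nat
  assumes "prime p" "gcd m (p*k) \<noteq> gcd m k"
  shows "gcd m (p*k) = p * gcd m k"
proof -
  have "gcd m k dvd gcd m (p*k)" by (simp add: gcd_mono)
  then obtain r where r: "gcd m (p*k) = gcd m k * r" by (rule dvdE)
  have "gcd m (p*k) dvd gcd (p*m) (p*k)" by (simp add: gcd_mono)
  moreover have "gcd (p*m) (p*k) = p * gcd m k" by (simp add: gcd_mult_distrib_nat)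
  ultimately have "gcd m k * r dvd gcd m k * p" using r by (metis mult.commute)
  moreover have "gcd m k \<noteq> 0" using assms by auto
  ultimately have "r dvd p" by auto
  then have "r = 1 \<or> r = p" using assms(1) by (simp add: prime_nat_iff)
  then show ?thesis using r assms by auto
qed

lemma nt2:
  fixes p m k :: nat
  assumes "gcd m (p*k) = p * gcd m k"
  shows "gcd (p * gcd m k) k = gcd m k"
proof (rule dvd_antisym)
  have "p * gcd m k dvd m" using assms by (metis gcd_dvd1)
  then show "gcd (p * gcd m k) k dvd gcd m k" by (meson dvd_trans gcd_dvd1 gcd_dvd2 gcd_greatest)
  show "gcd m k dvd gcd (p * gcd m k) k" by simp
qed

lemma G_unit:
  fixes z e :: "bit poly"
  assumes "e dvd (\<Sum>i<p. z^i)" "e dvd z - 1" "(of_nat p :: bit poly) = 1"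
  shows "is_unit e"
proof -
  have "e dvd (\<Sum>i<p. z^i) - of_nat p" using assms(2) geom_minus_p dvd_trans by blast
  then have "e dvd (\<Sum>i<p. z^i) - ((\<Sum>i<p. z^i) - of_nat p)" using assms(1) by (rule dvd_diff[rotated])
  then show ?thesis using assms(3) by simp
qed

lemma deg_xn:
  "degree ([:0,1::bit:]^n - 1) = n"
proof (cases n)
  case 0 then show ?thesis by simp
next
  case (Suc n')
  have "[:0,1::bit:]^n - 1 = [:0,1::bit:]^n + (-1)" by simp
  also have "degree \<dots> = degree ([:0,1::bit:]^n)"
    by (rule degree_add_eq_left) (simp add: degree_power_eq Suc)
  also have "\<dots> = n" by (simp add: degree_power_eq)
  finally show ?thesis .
qed

lemma main:
  fixes p m k :: nat
  assumes "prime p" "(of_nat p :: bit poly) = 1" "m > 0" "k > 0"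
  shows "coprime (\<Sum>i<p. ([:0,1::bit:]^k)^i) ([:0,1::bit:]^m - 1) \<longleftrightarrow> gcd m (p*k) = gcd m k"
proof -
  define x where "x = [:0,1::bit:]"
  define z where "z = x^k"
  define G where "G = (\<Sum>i<p. z^i)"
  define g where "g = gcd m k"
  have zG: "(z - 1) * G = x^(p*k) - 1"
    unfolding G_def z_def by (simp add: power_diff_1_eq power_mult mult.commute)
  show ?thesis unfolding x_def[symmetric] z_def[symmetric] G_def[symmetric] g_def[symmetric]
  proof
    assume h: "gcd m (p*k) = g"
    show "coprime G (x^m - 1)"
    proof (rule coprimeI)
      fix d assume d1: "d dvd G" and d2: "d dvd x^m - 1"
      have "d dvd x^(p*k) - 1" using d1 zG by (metis dvd_mult)
      then have "d dvd x^(gcd m (p*k)) - 1" using d2 dvd_pow_gcd by blast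
      then have "d dvd x^g - 1" using h by simp
      moreover have "x^g - 1 dvd z - 1" unfolding z_def g_def
        by (metis gcd_dvd2 power_one_right pow_minus_one_dvd power_mult)
      ultimately have "d dvd z - 1" by (rule dvd_trans)
      then show "is_unit d" using G_unit d1 assms(2) unfolding G_def by blast
    qed
  next
    assume cop: "coprime G (x^m - 1)"
    show "gcd m (p*k) = g"
    proof (rule ccontr)
      assume ne: "gcd m (p*k) \<noteq> g"
      have h: "gcd m (p*k) = p * g" using nt1[OF assms(1)] ne unfolding g_def by blast
      have h2: "gcd (p*g) k = g" using nt2 h unfolding g_def by blast
      define S where "S = (\<Sum>i<p. (x^g)^i)"
      have xS: "(x^g - 1) * S = x^(p*g) - 1"
        unfolding S_def by (simp add: power_diff_1_eq power_mult mult.commute)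
      have Sm: "S dvd x^m - 1"
      proof -
        have "p*g dvd m" using h by (metis gcd_dvd1)
        then have "x^(p*g) - 1 dvd x^m - 1" by (rule pow_minus_one_dvd)
        then show ?thesis using xS by (metis dvd_mult_right dvd_mult_left)
      qed
      have "S dvd x^(p*k) - 1"
      proof -
        have "p*g dvd p*k" by (simp add: g_def)
        then have "x^(p*g) - 1 dvd x^(p*k) - 1" by (rule pow_minus_one_dvd)
        then show ?thesis using xS by (metis dvd_mult_right dvd_mult_left)
      qed
      then obtain W where W: "(z - 1) * G = S * W" using zG by (metis dvdE)
      have "x^g - 1 dvd S - of_nat p" unfolding S_def by (rule geom_minus_p)
      then obtain R where eq1: "S - 1 = (x^g - 1) * R" using assms(2) by (metis dvdE)
      have pg0: "p*g \<noteq> 0" using assms(1,3) g_def by (simp add: prime_gt_0_nat)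
      obtain U V where eq2: "x^g - 1 = U * (x^(p*g) - 1) - V * (x^k - 1)"
        using bez[OF pg0, of x k] h2 by auto
      have eq2': "x^g - 1 = U * ((x^g - 1) * S) - V * (z - 1)" using eq2 xS z_def by simp
      have one: "1 = S * (1 - R * U * (x^g - 1)) + R * V * (z - 1)"
        by (rule ring_aux[OF eq1 eq2'])
      have "G = S * (G * (1 - R * U * (x^g - 1)) + R * V * W)"
      proof -
        have "G = G * (S * (1 - R * U * (x^g - 1)) + R * V * (z - 1))" using one by simp
        also have "\<dots> = S * (G * (1 - R * U * (x^g - 1))) + R * V * ((z - 1) * G)"
          by (simp add: algebra_simps)
        also have "\<dots> = S * (G * (1 - R * U * (x^g - 1)) + R * V * W)"
          unfolding W by (simp add: algebra_simps)
        finally show ?thesis .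
      qed
      then have "S dvd G" by (metis dvd_triv_left)
      then have uS: "is_unit S" using Sm cop coprime_common_divisor by blast
      have g0: "g > 0" using assms(3) g_def by simp
      have p2: "p \<ge> 2" using assms(1) prime_ge_2_nat by blast
      have "x^g - 1 \<noteq> 0" using deg_xn[of g] g0 x_def by auto
      moreover have "S \<noteq> 0" using uS by auto
      ultimately have "degree (x^(p*g) - 1) = degree (x^g - 1) + degree S"
        by (simp add: xS[symmetric] degree_mult_eq)
      then have "p*g = g + degree S" using deg_xn x_def by simp
      moreover have "degree S = 0" using uS \<open>S \<noteq> 0\<close> is_unit_iff_degree by blast
      ultimately have "p*g = g" by simp
      moreover have "2*g \<le> p*g" using p2 by simp
      ultimately show False using g0 by linarith
    qed
  qed
qed


lemma two_bit_poly: "(2::bit poly) = 0"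
proof -
  have "(2::bit poly) = [:1:] + [:1:]" by (simp flip: one_add_one add: one_pCons)
  also have "\<dots> = 0" by simp
  finally show ?thesis .
qed

lemma nums:
  "(of_nat 3 :: bit poly) = 1" "(of_nat 5 :: bit poly) = 1" "(2::bit poly) = 0" "prime (3::nat)" "prime (5::nat)"
  by (simp_all add: of_nat_poly two_bit_poly)

lemma pcompose_power: "pcompose (p ^ n) q = (pcompose p q) ^ n"
  by (induction n) (simp_all add: pcompose_mult pcompose_1)

lemma pcompose_monom1: "pcompose (monom (1::'a::comm_ring_1) n) q = q ^ n"
  by (simp add: monom_altdef pcompose_power pcompose_pCons)

lemma cop_cong:
  fixes a b n :: "bit poly"
  assumes "n dvd a - b"
  shows "coprime a n \<longleftrightarrow> coprime b n"
proof -
  have "c dvd a \<longleftrightarrow> c dvd b" if "c dvd n" for c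
  proof -
    have cab: "c dvd a - b" using that assms dvd_trans by blast
    show ?thesis
    proof
      assume "c dvd a" then have "c dvd a - (a - b)" using cab by (rule dvd_diff)
      then show "c dvd b" by simp
    next
      assume "c dvd b" then have "c dvd (a - b) + b" using cab by (simp only: dvd_add)
      then show "c dvd a" by simp
    qed
  qed
  then show ?thesis unfolding coprime_def by blast
qed

lemma poly_ident:
  fixes z :: "'a::comm_ring_1"
  shows "(1 + z + z^2) * (1 + z + z^2 + z^3 + z^4)^3 =
    (1 + z^3 + z^4 + z^5 + z^7 + z^9 + z^10 + z^11 + z^14) +
    2 * (2*z + 5*z^2 + 9*z^3 + 15*z^4 + 21*z^5 + 26*z^6 + 27*z^7 + 26*z^8 + 21*z^9 + 15*z^10 + 9*z^11 + 5*z^12 + 2*z^13)"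
  by (simp add: algebra_simps power3_eq_cube power2_eq_square eval_nat_numeral)


theorem proposition6:
  fixes m k :: nat
  assumes "m \<ge> 15" and "k \<ge> 1"
  shows "coprime (pcompose (c_poly m) (monom 1 k)) (monom 1 m - 1)
    \<longleftrightarrow> (gcd m (3 * k) = gcd m k \<and> gcd m (5 * k) = gcd m k)"
proof -
  define x where "x = [:0,1::bit:]"
  define z where "z = x^k"
  define w where "w = z^(m-7)"
  define C where "C = pcompose (c_poly m) (monom 1 k)"
  define n where "n = x^m - (1::bit poly)"
  have mon: "monom (1::bit) j = x^j" for j unfolding x_def by (simp add: monom_altdef)
  have Ceq: "C = 1 + ((z^2 + z^(m-2)) + ((z^3 + z^(m-3)) + ((z^4 + z^(m-4)) + (z^7 + z^(m-7)))))"
    unfolding C_def c_poly_def z_def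
    by (simp add: pcompose_add pcompose_sum pcompose_1 pcompose_monom1 monom_altdef pcompose_power pcompose_pCons x_def flip: power_mult)
  have pw: "z^(m-j) = w * z^(7-j)" if "j \<le> 7" for j
  proof -
    have "m - j = (m-7) + (7-j)" using that assms(1) by simp
    then show ?thesis unfolding w_def by (simp add: power_add)
  qed
  have C2: "C = 1 + z^2 + z^3 + z^4 + z^7 + w * (z^5 + z^4 + z^3 + 1)"
    unfolding Ceq using pw[of 2] pw[of 3] pw[of 4] pw[of 7] by (simp add: algebra_simps)
  define P where "P = (1 + z^3 + z^4 + z^5 + z^7 + z^9 + z^10 + z^11 + z^14)"
  have D: "z^7 * C - P = (z^7 * w - 1) * (z^5 + z^4 + z^3 + 1)"
    unfolding C2 P_def by (simp add: algebra_simps eval_nat_numeral)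
  have zw: "z^7 * w = (x^m)^k"
  proof -
    have "z^7 * w = z^m" unfolding w_def using assms(1) by (simp flip: power_add)
    then show ?thesis unfolding z_def by (simp flip: power_mult add: mult.commute)
  qed
  have "n dvd (x^m)^k - 1" unfolding n_def using pow_minus_one_dvd[of 1 k "x^m"] by simp
  then have "n dvd z^7 * C - P" unfolding D zw by simp
  then have c1: "coprime (z^7 * C) n \<longleftrightarrow> coprime P n" by (rule cop_cong)
  have cx: "coprime x n"
  proof (rule coprimeI)
    fix d assume "d dvd x" "d dvd n"
    moreover have "x dvd x^m" using assms(1) by (intro dvd_power) simp
    ultimately have "d dvd x^m" using dvd_trans by blast
    then have "d dvd x^m - n" using \<open>d dvd n\<close> by (rule dvd_diff)
    then show "is_unit d" unfolding n_def by simp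
  qed
  have cz: "coprime (z^7) n" unfolding z_def using cx by (simp flip: power_mult)
  have c2: "coprime C n \<longleftrightarrow> coprime P n" using c1 cz by simp
  define T where "T = (\<Sum>i<3. z^i)"
  define U where "U = (\<Sum>i<5. z^i)"
  have "T * U^3 = P"
  proof -
    have "T * U^3 = (1 + z + z^2) * (1 + z + z^2 + z^3 + z^4)^3"
      unfolding T_def U_def by (simp add: eval_nat_numeral algebra_simps)
    also have "\<dots> = P" unfolding P_def poly_ident using nums(3) by simp
    finally show ?thesis .
  qed
  then have "coprime P n \<longleftrightarrow> coprime T n \<and> coprime (U^3) n"
    by (metis coprime_mult_left_iff)
  moreover have "coprime (U^3) n \<longleftrightarrow> coprime U n" using coprime_power_left_iff[of U 3 n] by simp
  ultimately have c3: "coprime C n \<longleftrightarrow> coprime T n \<and> coprime U n" using c2 by simp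
  have m0: "m > 0" "k > 0" using assms by auto
  have "coprime T n \<longleftrightarrow> gcd m (3*k) = gcd m k"
    unfolding T_def z_def n_def x_def using main[OF nums(4) nums(1) m0] .
  moreover have "coprime U n \<longleftrightarrow> gcd m (5*k) = gcd m k"
    unfolding U_def z_def n_def x_def using main[OF nums(5) nums(2) m0] .
  moreover have "monom 1 m - 1 = n" unfolding n_def mon ..
  ultimately show ?thesis using c3 unfolding C_def by simp
qed

end
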